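(* For all $t\ge0$ and $x,y\in\mathbb R^d$, $$H^\nu_t(x,y)\le2(1+|y|)\hbar^\nu_t(x),$$ where $H^\nu_t(x,y):=\int_{B_\ell^c}\log\big(1+\frac{|z|}{1+|x-y|}\big)\nu_{t,x}(dz)$ and $\hbar^\nu_t(x):=\int_{B_\ell^c}\log\big(1+\frac{|z|}{1+|x|}\big)\nu_{t,x}(dz)$.
   Context: $d\ge1$, $\ell\in(0,1/\sqrt2)$, $B_\ell^c=\{z\in\mathbb R^d:|z|\ge\ell\}$, and $\{\nu_{t,x}\}_{t\ge0,x\in\mathbb R^d}$ is a family of (nonnegative) Lévy measures on $\mathbb R^d$. *)

theory Defs
  imports "HOL-Analysis.Analysis"
begin

definition levy_measure :: "'a::euclidean_space measure \<Rightarrow> bool" where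
  "levy_measure M \<longleftrightarrow> sets M = sets borel \<and> emeasure M {0} = 0 \<and>
     (\<integral>\<^sup>+ z. ennreal (min 1 ((norm z)\<^sup>2)) \<partial>M) < \<infinity>"

definition Bc :: "real \<Rightarrow> 'a::euclidean_space set" where
  "Bc l = {z. norm z \<ge> l}"

definition H_nu :: "(real \<Rightarrow> 'a::euclidean_space \<Rightarrow> 'a measure) \<Rightarrow> real \<Rightarrow> real \<Rightarrow> 'a \<Rightarrow> 'a \<Rightarrow> ennreal" where
  "H_nu \<nu> l t x y = (\<integral>\<^sup>+ z. ennreal (ln (1 + norm z / (1 + norm (x - y)))) * indicator (Bc l) z \<partial>(\<nu> t x))"

definition hbar_nu :: "(real \<Rightarrow> 'a::euclidean_space \<Rightarrow> 'a measure) \<Rightarrow> real \<Rightarrow> real \<Rightarrow> 'a \<Rightarrow> ennreal" where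
  "hbar_nu \<nu> l t x = (\<integral>\<^sup>+ z. ennreal (ln (1 + norm z / (1 + norm x))) * indicator (Bc l) z \<partial>(\<nu> t x))"

end

theory Submission
  imports Defs
begin

lemma ln_scale:
  fixes u c :: real
  assumes "u \<ge> 0" "c \<ge> 1"
  shows "ln (1 + c * u) \<le> c * ln (1 + u)"
proof -
  have p: "1 + u > 0" "1 + c*u > 0" using assms by (auto intro: add_pos_nonneg)
  have "ln (1 + c*u) - ln (1+u) = ln ((1+c*u)/(1+u))" using p by (simp add: ln_div)
  also have "\<dots> \<le> (1+c*u)/(1+u) - 1" using p by (intro ln_le_minus_one) simp
  also have "\<dots> = (c-1) * (u/(1+u))" using p by (simp add: field_simps)
  also have "\<dots> \<le> (c-1) * ln (1+u)"
  proof (rule mult_left_mono)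
    have "ln (1/(1+u)) \<le> 1/(1+u) - 1" using p by (intro ln_le_minus_one) simp
    moreover have "1/(1+u) - 1 = - (u/(1+u))" using p by (simp add: field_simps)
    moreover have "ln (1/(1+u)) = - ln (1+u)" using p by (simp add: ln_div)
    ultimately show "u/(1+u) \<le> ln (1+u)" by linarith
  qed (use assms in simp)
  finally show ?thesis by (simp add: algebra_simps)
qed

lemma pointwise:
  fixes x y z :: "'a::euclidean_space"
  shows "ln (1 + norm z / (1 + norm (x - y))) \<le> 2 * (1 + norm y) * ln (1 + norm z / (1 + norm x))"
proof -
  define c where "c = 1 + norm y"
  define u where "u = norm z / (1 + norm x)"
  have c1: "c \<ge> 1" unfolding c_def by simp
  have u0: "u \<ge> 0" unfolding u_def by simp
  have "norm x \<le> norm (x - y) + norm y" by (metis add.commute diff_add_cancel norm_triangle_ineq)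
  hence b: "1 + norm x \<le> c * (1 + norm (x - y))" unfolding c_def
    by (simp add: algebra_simps) (smt (verit) mult_nonneg_nonneg norm_ge_zero)
  have "norm z / (1 + norm (x - y)) \<le> c * u"
  proof -
    have "norm z / (1 + norm (x - y)) = c * norm z / (c * (1 + norm (x - y)))" using c1 by simp
    also have "\<dots> \<le> c * norm z / (1 + norm x)"
      using b c1 by (intro divide_left_mono) (auto intro!: mult_pos_pos add_pos_nonneg)
    finally show ?thesis unfolding u_def by simp
  qed
  hence "ln (1 + norm z / (1 + norm (x - y))) \<le> ln (1 + c*u)"
    by (intro ln_mono) (auto intro: add_pos_nonneg)
  also have "\<dots> \<le> c * ln (1+u)" by (rule ln_scale[OF u0 c1])
  also have "\<dots> \<le> 2 * c * ln (1+u)" using c1 u0 by simp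
  finally show ?thesis unfolding c_def u_def .
qed

theorem lemma3p5:
  fixes \<nu> :: "real \<Rightarrow> 'a::euclidean_space \<Rightarrow> 'a measure" and l :: real
  assumes "0 < l" and "l < 1 / sqrt 2"
    and "\<And>t x. t \<ge> 0 \<Longrightarrow> levy_measure (\<nu> t x)"
  shows "\<forall>t \<ge> 0. \<forall>x y :: 'a. H_nu \<nu> l t x y \<le> 2 * ennreal (1 + norm y) * hbar_nu \<nu> l t x"
proof (intro allI impI)
  fix t :: real and x y :: 'a
  assume t: "t \<ge> 0"
  have sets: "sets (\<nu> t x) = sets borel" using assms(3)[OF t] unfolding levy_measure_def by simp
  have cl: "closed (Bc l :: 'a set)" unfolding Bc_def
    by (simp add: closed_Collect_le continuous_on_norm_id continuous_on_const)
  have meas: "(\<lambda>z. ennreal (ln (1 + norm z / (1 + norm x))) * indicator (Bc l) z) \<in> borel_measurable (\<nu> t x)"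
    unfolding measurable_cong_sets[OF sets refl]
    using borel_closed[OF cl] by measurable
  have "H_nu \<nu> l t x y \<le> (\<integral>\<^sup>+ z. ennreal (2 * (1 + norm y)) * (ennreal (ln (1 + norm z / (1 + norm x))) * indicator (Bc l) z) \<partial>(\<nu> t x))"
    unfolding H_nu_def
  proof (intro nn_integral_mono)
    fix z :: 'a
    have "ennreal (ln (1 + norm z / (1 + norm (x - y)))) \<le> ennreal (2 * (1 + norm y) * ln (1 + norm z / (1 + norm x)))"
      by (intro ennreal_leI pointwise)
    also have "\<dots> = ennreal (2 * (1 + norm y)) * ennreal (ln (1 + norm z / (1 + norm x)))"
      by (intro ennreal_mult) auto
    finally show "ennreal (ln (1 + norm z / (1 + norm (x - y)))) * indicator (Bc l) z
      \<le> ennreal (2 * (1 + norm y)) * (ennreal (ln (1 + norm z / (1 + norm x))) * indicator (Bc l) z)"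
      by (auto simp: indicator_def)
  qed
  also have "\<dots> = ennreal (2 * (1 + norm y)) * hbar_nu \<nu> l t x"
    unfolding hbar_nu_def by (rule nn_integral_cmult[OF meas])
  also have "\<dots> = 2 * ennreal (1 + norm y) * hbar_nu \<nu> l t x"
    by (simp add: ennreal_mult)
  finally show "H_nu \<nu> l t x y \<le> 2 * ennreal (1 + norm y) * hbar_nu \<nu> l t x" .
qed

end
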